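(* Let $\mathcal{H}_1$ and $\mathcal{H}_2$ be two hypertrees with the same vertex set $V$. Then $\mathcal{H}_1$ and $\mathcal{H}_2$ are equivalent if and only if they have the same basic sets. Moreover, if $\mathcal{H}_1$ and $\mathcal{H}_2$ have a common host tree $T$, then they are equivalent if and only if $I_{\mathcal{H}_1}(uv)=I_{\mathcal{H}_2}(uv)$ for every edge $uv$ of $T$.
   Context: A hypergraph $\mathcal{H}$ has a finite vertex set $V(\mathcal{H})$ and a finite family of nonempty subsets (edges). A host tree of $\mathcal{H}$ is a tree with vertex set $V(\mathcal{H})$ in which every edge induces a connected subgraph; $\mathcal{H}$ is a hypertree if it has one. Hypergraphs on the same vertex set are equivalent if they have the same host trees. For $V'\subseteq V(\mathcal{H})$, $I_\mathcal{H}(V')$ is the intersection of all edges of $\mathcal{H}$ containing $V'$, or $V(\mathcal{H})$ if none does; $I_\mathcal{H}(uv)=I_\mathcal{H}(\{u,v\})$. A union of sets is connected if the intersection graph of the sets is connected. $Comp(\mathcal{H})$ is the hypergraph without repeated edges on $V(\mathcal{H})$ whose edges are $V(\mathcal{H})$, all one-element subsets, and all proper subsets obtainable from edges of $\mathcal{H}$ by repeated nonempty intersections and connected unions. A basic set of $\mathcal{H}$ is an edge of $Comp(\mathcal{H})$ with more than one vertex that is not a connected union of strictly smaller edges of $Comp(\mathcal{H})$. *)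

theory Defs
  imports Main
begin

text \<open>A hypergraph is given by a finite vertex set V and an edge family E (a set of
  nonempty subsets of V). Graphs (trees) on V are given by their edge sets: sets of
  two-element subsets of V.\<close>

definition hypergraph :: "'a set \<Rightarrow> 'a set set \<Rightarrow> bool" where
  "hypergraph V E \<longleftrightarrow> finite V \<and> (\<forall>e\<in>E. e \<noteq> {} \<and> e \<subseteq> V)"

definition adj_in :: "'a set set \<Rightarrow> 'a set \<Rightarrow> ('a \<times> 'a) set" where
  "adj_in T S = {(u, v). u \<in> S \<and> v \<in> S \<and> {u, v} \<in> T}"

definition connected_in :: "'a set set \<Rightarrow> 'a set \<Rightarrow> bool" where
  "connected_in T S \<longleftrightarrow> (\<forall>u\<in>S. \<forall>v\<in>S. (u, v) \<in> (adj_in T S)\<^sup>*)"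

definition has_cycle :: "'a set set \<Rightarrow> bool" where
  "has_cycle T \<longleftrightarrow> (\<exists>cs. length cs \<ge> 3 \<and> distinct cs \<and>
      (\<forall>i < length cs. {cs ! i, cs ! ((i + 1) mod length cs)} \<in> T))"

definition is_tree :: "'a set \<Rightarrow> 'a set set \<Rightarrow> bool" where
  "is_tree V T \<longleftrightarrow> V \<noteq> {} \<and> T \<subseteq> {{u, v} | u v. u \<in> V \<and> v \<in> V \<and> u \<noteq> v}
     \<and> connected_in T V \<and> \<not> has_cycle T"

definition host_tree :: "'a set \<Rightarrow> 'a set set \<Rightarrow> 'a set set \<Rightarrow> bool" where
  "host_tree V E T \<longleftrightarrow> is_tree V T \<and> (\<forall>e\<in>E. connected_in T e)"

definition hypertree :: "'a set \<Rightarrow> 'a set set \<Rightarrow> bool" where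
  "hypertree V E \<longleftrightarrow> hypergraph V E \<and> (\<exists>T. host_tree V E T)"

definition equivalent :: "'a set \<Rightarrow> 'a set set \<Rightarrow> 'a set set \<Rightarrow> bool" where
  "equivalent V E1 E2 \<longleftrightarrow> (\<forall>T. host_tree V E1 T \<longleftrightarrow> host_tree V E2 T)"

definition I_H :: "'a set \<Rightarrow> 'a set set \<Rightarrow> 'a set \<Rightarrow> 'a set" where
  "I_H V E V' = (if {e \<in> E. V' \<subseteq> e} = {} then V else \<Inter> {e \<in> E. V' \<subseteq> e})"

definition int_graph_connected :: "'a set set \<Rightarrow> bool" where
  "int_graph_connected F \<longleftrightarrow>
     (\<forall>A\<in>F. \<forall>B\<in>F. (A, B) \<in> {(X, Y). X \<in> F \<and> Y \<in> F \<and> X \<inter> Y \<noteq> {}}\<^sup>*)"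

definition connected_union_of :: "'a set set \<Rightarrow> 'a set \<Rightarrow> bool" where
  "connected_union_of F S \<longleftrightarrow> F \<noteq> {} \<and> finite F \<and> int_graph_connected F \<and> \<Union> F = S"

inductive_set generated :: "'a set set \<Rightarrow> 'a set set" for E where
  edge: "e \<in> E \<Longrightarrow> e \<in> generated E"
| inter: "A \<in> generated E \<Longrightarrow> B \<in> generated E \<Longrightarrow> A \<inter> B \<noteq> {} \<Longrightarrow> A \<inter> B \<in> generated E"
| union: "(\<And>X. X \<in> F \<Longrightarrow> X \<in> generated E) \<Longrightarrow> connected_union_of F S \<Longrightarrow> S \<in> generated E"

definition Comp :: "'a set \<Rightarrow> 'a set set \<Rightarrow> 'a set set" where
  "Comp V E = {V} \<union> {{v} | v. v \<in> V} \<union> {S \<in> generated E. S \<subset> V}"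

definition basic_sets :: "'a set \<Rightarrow> 'a set set \<Rightarrow> 'a set set" where
  "basic_sets V E = {S \<in> Comp V E. card S > 1 \<and>
      \<not> (\<exists>F. F \<subseteq> {X \<in> Comp V E. X \<subset> S} \<and> connected_union_of F S)}"

end

theory Submission
  imports Defs
begin

lemma adj_mono: "K \<subseteq> K' \<Longrightarrow> S \<subseteq> S' \<Longrightarrow> adj_in K S \<subseteq> adj_in K' S'"
  by (auto simp: adj_in_def)

lemma reach_mono: "(x,y) \<in> (adj_in K S)\<^sup>* \<Longrightarrow> K \<subseteq> K' \<Longrightarrow> S \<subseteq> S' \<Longrightarrow> (x,y) \<in> (adj_in K' S')\<^sup>*"
proof -
  assume a: "(x,y) \<in> (adj_in K S)\<^sup>*" "K \<subseteq> K'" "S \<subseteq> S'"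
  have "adj_in K S \<subseteq> adj_in K' S'" using a(2,3) by (rule adj_mono)
  then have "(adj_in K S)\<^sup>* \<subseteq> (adj_in K' S')\<^sup>*" by (rule rtrancl_mono)
  then show ?thesis using a(1) by (rule subsetD)
qed

lemma rt_sub: "R \<subseteq> R' \<Longrightarrow> (x,y) \<in> R\<^sup>* \<Longrightarrow> (x,y) \<in> R'\<^sup>*"
  by (meson rtrancl_mono subsetD)

lemma reach_sym: "(x,y) \<in> (adj_in K S)\<^sup>* \<Longrightarrow> (y,x) \<in> (adj_in K S)\<^sup>*"
proof -
  assume a: "(x,y) \<in> (adj_in K S)\<^sup>*"
  have "sym (adj_in K S)" by (auto simp: sym_def adj_in_def insert_commute)
  then have "sym ((adj_in K S)\<^sup>*)" by (rule sym_rtrancl)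
  then show ?thesis using a by (meson symD)
qed

lemma reach_in: "(x,y) \<in> (adj_in K S)\<^sup>* \<Longrightarrow> x \<in> S \<Longrightarrow> y \<in> S"
  by (induction rule: rtrancl_induct) (auto simp: adj_in_def)

lemma reach_edge: "{x,y} \<in> K \<Longrightarrow> x\<in>S \<Longrightarrow> y\<in>S \<Longrightarrow> (x,y) \<in> (adj_in K S)\<^sup>*"
  by (rule r_into_rtrancl) (auto simp: adj_in_def)

lemma reach_trans: "(x,y) \<in> (adj_in K S)\<^sup>* \<Longrightarrow> (y,z) \<in> (adj_in K S)\<^sup>* \<Longrightarrow> (x,z) \<in> (adj_in K S)\<^sup>*"
  by (rule rtrancl_trans)

lemma reach_insert:
  "(x,y) \<in> (adj_in (insert {a,b} K) S)\<^sup>* \<Longrightarrow> (x,y) \<in> (adj_in K S)\<^sup>*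
    \<or> ((x,a) \<in> (adj_in K S)\<^sup>* \<and> (b,y) \<in> (adj_in K S)\<^sup>*)
    \<or> ((x,b) \<in> (adj_in K S)\<^sup>* \<and> (a,y) \<in> (adj_in K S)\<^sup>*)"
proof (induction rule: rtrancl_induct)
  case base show ?case by simp
next
  case (step y z)
  from step.hyps(2) have yz: "y\<in>S" "z\<in>S" "{y,z} = {a,b} \<or> {y,z}\<in>K" by (auto simp: adj_in_def)
  show ?case
  proof (cases "{y,z}\<in>K")
    case True then have "(y,z) \<in> adj_in K S" using yz by (auto simp: adj_in_def)
    then show ?thesis using step.IH by (meson rtrancl.rtrancl_into_rtrancl)
  next
    case False then have "{y,z}={a,b}" using yz by auto
    then have "(y=a \<and> z=b) \<or> (y=b \<and> z=a)" by (auto simp: doubleton_eq_iff)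
    then show ?thesis using step.IH by auto
  qed
qed

definition walk :: "('a\<times>'a) set \<Rightarrow> 'a list \<Rightarrow> bool" where
  "walk R xs \<longleftrightarrow> (\<forall>i. Suc i < length xs \<longrightarrow> (xs!i, xs!Suc i) \<in> R)"

lemma rtrancl_dwalk: "(x,y) \<in> R\<^sup>* \<Longrightarrow> \<exists>xs. xs \<noteq> [] \<and> hd xs = x \<and> last xs = y \<and> distinct xs \<and> walk R xs"
proof (induction rule: rtrancl_induct)
  case base show ?case by (intro exI[of _ "[x]"]) (auto simp: walk_def)
next
  case (step y z)
  then obtain xs where xs: "xs \<noteq> []" "hd xs = x" "last xs = y" "distinct xs" "walk R xs" by blast
  show ?case
  proof (cases "z \<in> set xs")
    case True then obtain k where k: "k < length xs" "xs!k = z" by (auto simp: in_set_conv_nth)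
    let ?ys = "take (Suc k) xs"
    have "?ys \<noteq> []" using xs(1) by simp
    moreover have "hd ?ys = x" using xs by simp
    moreover have "last ?ys = z" using k by (simp add: take_Suc_conv_app_nth)
    moreover have "distinct ?ys" using xs by simp
    moreover have "walk R ?ys" using xs(5) by (auto simp: walk_def)
    ultimately show ?thesis by blast
  next
    case False
    let ?ys = "xs @ [z]"
    have "walk R ?ys" unfolding walk_def
    proof (intro allI impI)
      fix i assume i: "Suc i < length ?ys"
      show "(?ys!i, ?ys!Suc i) \<in> R"
      proof (cases "Suc i < length xs")
        case True then show ?thesis using xs(5) by (auto simp: walk_def nth_append)
      next
        case False then have "i = length xs - 1" "Suc i = length xs" using i by auto
        then show ?thesis using xs(1,3) step.hyps(2) by (auto simp: nth_append last_conv_nth)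
      qed
    qed
    then show ?thesis using xs False by (intro exI[of _ ?ys]) auto
  qed
qed

lemma walk_rtrancl: "walk R xs \<Longrightarrow> i \<le> j \<Longrightarrow> j < length xs \<Longrightarrow> (xs!i, xs!j) \<in> R\<^sup>*"
proof (induction j)
  case 0 then show ?case by simp
next
  case (Suc j)
  show ?case
  proof (cases "i = Suc j")
    case True then show ?thesis by simp
  next
    case False
    then have "(xs!i, xs!j) \<in> R\<^sup>*" using Suc by auto
    moreover have "(xs!j, xs!Suc j) \<in> R" using Suc.prems by (auto simp: walk_def)
    ultimately show ?thesis by simp
  qed
qed

lemma reach_cycle:
  assumes "{x,y} \<in> K" "x \<noteq> y" "(x,y) \<in> (adj_in (K - {{x,y}}) S)\<^sup>*"
  shows "has_cycle K"
proof -
  obtain xs where xs: "xs \<noteq> []" "hd xs = x" "last xs = y" "distinct xs" "walk (adj_in (K - {{x,y}}) S) xs"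
    using rtrancl_dwalk[OF assms(3)] by blast
  let ?n = "length xs"
  have h0: "xs!0 = x" using xs by (simp add: hd_conv_nth)
  have hl: "xs!(?n - 1) = y" using xs by (simp add: last_conv_nth)
  have "?n \<noteq> 1" using h0 hl assms(2) by auto
  moreover have "?n \<noteq> 2"
  proof
    assume "?n = 2"
    then have "(xs!0, xs!1) \<in> adj_in (K - {{x,y}}) S" using xs(5) by (auto simp: walk_def)
    then show False using h0 hl \<open>?n = 2\<close> by (auto simp: adj_in_def)
  qed
  moreover have "?n \<noteq> 0" using xs by simp
  ultimately have n3: "?n \<ge> 3" by linarith
  have "\<forall>i < ?n. {xs ! i, xs ! ((i + 1) mod ?n)} \<in> K"
  proof (intro allI impI)
    fix i assume i: "i < ?n"
    show "{xs ! i, xs ! ((i + 1) mod ?n)} \<in> K"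
    proof (cases "i + 1 < ?n")
      case True
      then have "(xs!i, xs!Suc i) \<in> adj_in (K - {{x,y}}) S" using xs(5) by (auto simp: walk_def)
      then show ?thesis using True by (auto simp: adj_in_def)
    next
      case False
      then have si: "Suc i = ?n" using i by auto
      then have "i = ?n - 1" "(i+1) mod ?n = 0" by auto
      then show ?thesis using h0 hl assms(1) by (simp add: insert_commute)
    qed
  qed
  then show ?thesis unfolding has_cycle_def using n3 xs(4) by blast
qed

lemma cycle_reach:
  assumes "has_cycle K"
  shows "\<exists>x y. {x,y} \<in> K \<and> x \<noteq> y \<and> (x,y) \<in> (adj_in (K - {{x,y}}) (\<Union>K))\<^sup>*"
proof -
  obtain cs where cs: "length cs \<ge> 3" "distinct cs" "\<forall>i < length cs. {cs ! i, cs ! ((i + 1) mod length cs)} \<in> K"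
    using assms unfolding has_cycle_def by blast
  let ?n = "length cs"
  let ?R = "adj_in (K - {{cs!0, cs!1}}) (\<Union>K)"
  have ne: "cs!i \<noteq> cs!j" if "i < ?n" "j < ?n" "i \<noteq> j" for i j
    using cs(2) that by (simp add: nth_eq_iff_index_eq)
  have path: "(cs!1, cs!j) \<in> ?R\<^sup>*" if "1 \<le> j" "j < ?n" for j
    using that
  proof (induction j)
    case 0 then show ?case by simp
  next
    case (Suc j)
    show ?case
    proof (cases "j = 0")
      case True then show ?thesis by simp
    next
      case False
      have e: "{cs!j, cs!Suc j} \<in> K" using cs(3) Suc.prems by (metis Suc_eq_plus1 Suc_lessD mod_less)
      have "cs!0 \<noteq> cs!j" using ne[of 0 j] Suc.prems False by linarith
      moreover have "cs!0 \<noteq> cs!Suc j" using ne[of 0 "Suc j"] Suc.prems by linarith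
      ultimately have "{cs!j, cs!Suc j} \<noteq> {cs!0, cs!1}" by (auto simp: doubleton_eq_iff)
      moreover have "cs!j \<in> \<Union>K" "cs!Suc j \<in> \<Union>K" using e by blast+
      ultimately have "(cs!j, cs!Suc j) \<in> ?R" using e by (simp add: adj_in_def)
      moreover have "(cs!1, cs!j) \<in> ?R\<^sup>*" using Suc False by simp
      ultimately show ?thesis by (meson rtrancl_into_rtrancl)
    qed
  qed
  have m: "Suc (?n - 1) = ?n" using cs(1) by simp
  have e: "{cs!(?n-1), cs!0} \<in> K" using cs(3)[rule_format, of "?n - 1"] cs(1) m by simp
  have "cs!(?n-1) \<noteq> cs!0" using ne[of "?n - 1" 0] cs(1) by linarith
  moreover have "cs!(?n-1) \<noteq> cs!1" using ne[of "?n - 1" 1] cs(1) by linarith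
  ultimately have "{cs!(?n-1), cs!0} \<noteq> {cs!0, cs!1}" by (auto simp: doubleton_eq_iff)
  moreover have "cs!(?n-1) \<in> \<Union>K" "cs!0 \<in> \<Union>K" using e by blast+
  ultimately have "(cs!(?n-1), cs!0) \<in> ?R" using e by (simp add: adj_in_def)
  moreover have "(cs!1, cs!(?n-1)) \<in> ?R\<^sup>*" using path[of "?n - 1"] cs(1) by simp
  ultimately have "(cs!1, cs!0) \<in> ?R\<^sup>*" by simp
  then have "(cs!0, cs!1) \<in> ?R\<^sup>*" by (rule reach_sym)
  moreover have "{cs!0, cs!1} \<in> K"
  proof -
    have "0 < length cs" using cs(1) by linarith
    then have "{cs!0, cs!((0+1) mod length cs)} \<in> K" using cs(3) by blast
    moreover have "(0+1) mod length cs = 1" using cs(1) by simp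
    ultimately show ?thesis by simp
  qed
  moreover have "cs!0 \<noteq> cs!1" using ne[of 0 1] cs(1) by linarith
  ultimately show ?thesis by blast
qed

lemma tree_edges: "is_tree V T \<Longrightarrow> e \<in> T \<Longrightarrow> \<exists>a b. e = {a,b} \<and> a \<in> V \<and> b \<in> V \<and> a \<noteq> b"
  unfolding is_tree_def by blast

lemma tree_edge_ne: "is_tree V T \<Longrightarrow> {x,y} \<in> T \<Longrightarrow> x \<noteq> y \<and> x \<in> V \<and> y \<in> V"
  using tree_edges[of V T "{x,y}"] by (auto simp: doubleton_eq_iff)

lemma tree_Union: "is_tree V T \<Longrightarrow> \<Union>T \<subseteq> V"
proof
  fix z assume T: "is_tree V T" and "z \<in> \<Union>T"
  then obtain e where e: "e \<in> T" "z \<in> e" by blast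
  then obtain a b where "e = {a,b}" "a \<in> V" "b \<in> V" using tree_edges[OF T e(1)] by blast
  then show "z \<in> V" using e by auto
qed

lemma tree_adj_V: "is_tree V T \<Longrightarrow> adj_in T S \<subseteq> adj_in T V"
  using tree_edge_ne by (fastforce simp: adj_in_def)

lemma tree_edge_sep: "is_tree V T \<Longrightarrow> {x,y} \<in> T \<Longrightarrow> (x,y) \<notin> (adj_in (T - {{x,y}}) V)\<^sup>*"
  using reach_cycle[of x y T V] tree_edge_ne[of V T x y] unfolding is_tree_def by blast

lemma acyclic_crit:
  assumes "\<Union>K \<subseteq> V" "\<And>x y. {x,y} \<in> K \<Longrightarrow> x \<noteq> y \<Longrightarrow> (x,y) \<notin> (adj_in (K - {{x,y}}) V)\<^sup>*"
  shows "\<not> has_cycle K"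
proof
  assume "has_cycle K"
  then obtain x y where "{x,y} \<in> K" "x \<noteq> y" "(x,y) \<in> (adj_in (K - {{x,y}}) (\<Union>K))\<^sup>*"
    using cycle_reach by blast
  moreover have "(x,y) \<in> (adj_in (K - {{x,y}}) V)\<^sup>*" by (rule reach_mono[OF calculation(3) order_refl assms(1)])
  ultimately show False using assms(2) by blast
qed

lemma walk_in_conn:
  assumes T: "is_tree V T" and B: "connected_in T B" and w: "walk (adj_in T V) xs"
    and d: "distinct xs" and ne: "xs \<noteq> []" and h: "hd xs \<in> B" and l: "last xs \<in> B"
  shows "set xs \<subseteq> B"
proof (rule ccontr)
  let ?n = "length xs"
  assume "\<not> set xs \<subseteq> B"
  then have ex: "\<exists>i. i < ?n \<and> xs!i \<notin> B" by (auto simp: in_set_conv_nth)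
  define i where "i = (LEAST i. i < ?n \<and> xs!i \<notin> B)"
  have i: "i < ?n" "xs!i \<notin> B" using LeastI_ex[OF ex] unfolding i_def by auto
  have min: "\<And>k. k < i \<Longrightarrow> xs!k \<in> B" using not_less_Least i(1) unfolding i_def
    by (metis (mono_tags, lifting) less_trans)
  have h0: "xs!0 = hd xs" using ne by (simp add: hd_conv_nth)
  have "i \<noteq> 0" using i h0 h by (metis)
  define a where "a = xs!(i-1)"
  define b where "b = xs!i"
  have aB: "a \<in> B" using min \<open>i \<noteq> 0\<close> unfolding a_def by simp
  have ab: "(a,b) \<in> adj_in T V" using w \<open>i \<noteq> 0\<close> i(1) unfolding walk_def a_def b_def
    by (metis One_nat_def Suc_pred not_gr_zero)
  then have abT: "{a,b} \<in> T" by (auto simp: adj_in_def)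
  let ?G = "T - {{a,b}}"
  have "adj_in T B \<subseteq> adj_in ?G V"
  proof
    fix p assume p: "p \<in> adj_in T B"
    then obtain p1 p2 where pp: "p = (p1,p2)" "p1 \<in> B" "p2 \<in> B" "{p1,p2} \<in> T" by (auto simp: adj_in_def)
    then have "{p1,p2} \<noteq> {a,b}" using i(2) b_def by auto
    then show "p \<in> adj_in ?G V" using pp tree_edge_ne[OF T, of p1 p2] by (auto simp: adj_in_def)
  qed
  then have r1: "(a, last xs) \<in> (adj_in ?G V)\<^sup>*" using B aB l unfolding connected_in_def
    by (meson rtrancl_mono subsetD)
  have r2: "(xs!i, xs!k) \<in> (adj_in ?G V)\<^sup>*" if "i \<le> k" "k < ?n" for k
    using that
  proof (induction k)
    case 0 then show ?case by simp
  next
    case (Suc k)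
    show ?case
    proof (cases "i = Suc k")
      case True then show ?thesis by simp
    next
      case False
      then have ik: "i \<le> k" using Suc by simp
      have e: "(xs!k, xs!Suc k) \<in> adj_in T V" using w Suc.prems unfolding walk_def by simp
      have "a \<noteq> xs!k" "a \<noteq> xs!Suc k" unfolding a_def using d Suc.prems ik \<open>i\<noteq>0\<close>
        by (simp_all add: nth_eq_iff_index_eq)
      then have "{xs!k, xs!Suc k} \<noteq> {a,b}" by (auto simp: doubleton_eq_iff)
      then have "(xs!k, xs!Suc k) \<in> adj_in ?G V" using e by (auto simp: adj_in_def)
      moreover have "(xs!i, xs!k) \<in> (adj_in ?G V)\<^sup>*" using Suc ik by simp
      ultimately show ?thesis by (meson rtrancl_into_rtrancl)
    qed
  qed
  have "(b, last xs) \<in> (adj_in ?G V)\<^sup>*" using r2[of "?n - 1"] i ne unfolding b_def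
    by (simp add: last_conv_nth)
  then have "(a,b) \<in> (adj_in ?G V)\<^sup>*" using r1 by (meson reach_sym rtrancl_trans)
  then show False using tree_edge_sep[OF T abT] by simp
qed

lemma walk_set_in: "walk (adj_in K A) xs \<Longrightarrow> xs \<noteq> [] \<Longrightarrow> hd xs \<in> A \<Longrightarrow> set xs \<subseteq> A"
proof
  fix z assume w: "walk (adj_in K A) xs" and ne: "xs \<noteq> []" and h: "hd xs \<in> A" and z: "z \<in> set xs"
  then obtain i where i: "i < length xs" "xs!i = z" by (auto simp: in_set_conv_nth)
  show "z \<in> A"
  proof (cases i)
    case 0 then show ?thesis using i h ne by (simp add: hd_conv_nth)
  next
    case (Suc j)
    then have "Suc j < length xs" using i by simp
    then have "(xs!j, xs!Suc j) \<in> adj_in K A" using w unfolding walk_def by blast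
    then have "(xs!j, xs!i) \<in> adj_in K A" using Suc by simp
    then show ?thesis using i by (auto simp: adj_in_def)
  qed
qed

lemma inter_conn:
  assumes T: "is_tree V T" and A: "connected_in T A" and B: "connected_in T B"
  shows "connected_in T (A \<inter> B)"
  unfolding connected_in_def
proof (intro ballI)
  fix x y assume x: "x \<in> A \<inter> B" and y: "y \<in> A \<inter> B"
  then have "(x,y) \<in> (adj_in T A)\<^sup>*" using A unfolding connected_in_def by blast
  then obtain xs where xs: "xs \<noteq> []" "hd xs = x" "last xs = y" "distinct xs" "walk (adj_in T A) xs"
    using rtrancl_dwalk by metis
  have "walk (adj_in T V) xs" using xs(5) tree_adj_V[OF T, of A] unfolding walk_def by blast
  then have sB: "set xs \<subseteq> B" using walk_in_conn[OF T B] xs x y by blast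
  have sA: "set xs \<subseteq> A" using walk_set_in xs x by blast
  have "walk (adj_in T (A \<inter> B)) xs" unfolding walk_def
  proof (intro allI impI)
    fix i assume i: "Suc i < length xs"
    then have "xs!i \<in> set xs" "xs!Suc i \<in> set xs" by auto
    then show "(xs!i, xs!Suc i) \<in> adj_in T (A \<inter> B)" using xs(5) i sA sB unfolding walk_def
      by (auto simp: adj_in_def)
  qed
  from walk_rtrancl[OF this, of 0 "length xs - 1"] show "(x,y) \<in> (adj_in T (A \<inter> B))\<^sup>*"
    using xs by (simp add: hd_conv_nth last_conv_nth)
qed

lemma conn_union:
  assumes C: "\<And>X. X \<in> F \<Longrightarrow> connected_in K X" and I: "int_graph_connected F"
  shows "connected_in K (\<Union>F)"
  unfolding connected_in_def
proof (intro ballI)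
  fix x y assume "x \<in> \<Union>F" "y \<in> \<Union>F"
  then obtain A B where AB: "A \<in> F" "B \<in> F" "x \<in> A" "y \<in> B" by blast
  let ?rel = "{(X, Y). X \<in> F \<and> Y \<in> F \<and> X \<inter> Y \<noteq> {}}"
  have "(A,B) \<in> ?rel\<^sup>*" using I AB unfolding int_graph_connected_def by blast
  then have "\<forall>z\<in>B. (x,z) \<in> (adj_in K (\<Union>F))\<^sup>*"
  proof (induction rule: rtrancl_induct)
    case base
    show ?case
    proof
      fix z assume "z \<in> A"
      then have "(x,z) \<in> (adj_in K A)\<^sup>*" using C[OF AB(1)] AB(3) unfolding connected_in_def by blast
      then show "(x,z) \<in> (adj_in K (\<Union>F))\<^sup>*" by (rule reach_mono[OF _ order_refl Union_upper[OF AB(1)]])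
    qed
  next
    case (step Y Z)
    then obtain p where p: "p \<in> Y" "p \<in> Z" "Y \<in> F" "Z \<in> F" by blast
    show ?case
    proof
      fix z assume "z \<in> Z"
      then have "(p,z) \<in> (adj_in K Z)\<^sup>*" using C[OF p(4)] p unfolding connected_in_def by blast
      then have "(p,z) \<in> (adj_in K (\<Union>F))\<^sup>*" by (rule reach_mono[OF _ order_refl Union_upper[OF p(4)]])
      then show "(x,z) \<in> (adj_in K (\<Union>F))\<^sup>*" using step.IH p(1) by (meson rtrancl_trans)
    qed
  qed
  then show "(x,y) \<in> (adj_in K (\<Union>F))\<^sup>*" using AB by blast
qed

lemma tree_split:
  assumes T: "is_tree V T" and e: "{u,v} \<in> T" and z: "z \<in> V"
  shows "(u,z) \<in> (adj_in (T - {{u,v}}) V)\<^sup>* \<or> (v,z) \<in> (adj_in (T - {{u,v}}) V)\<^sup>*"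
proof -
  have "u \<in> V" using tree_edge_ne[OF T e] by simp
  then have "(u,z) \<in> (adj_in T V)\<^sup>*" using T z unfolding is_tree_def connected_in_def by blast
  moreover have "T = insert {u,v} (T - {{u,v}})" using e by blast
  ultimately have "(u,z) \<in> (adj_in (insert {u,v} (T - {{u,v}})) V)\<^sup>*" by simp
  from reach_insert[OF this] show ?thesis by blast
qed

lemma exchange:
  assumes T: "is_tree V T" and e: "{u,v} \<in> T" and w: "w \<in> V"
    and vw: "(v,w) \<in> (adj_in (T - {{u,v}}) V)\<^sup>*"
  shows "is_tree V (insert {u,w} (T - {{u,v}}))"
proof -
  let ?G = "T - {{u,v}}"
  let ?T' = "insert {u,w} ?G"
  have sep: "(u,v) \<notin> (adj_in ?G V)\<^sup>*" using tree_edge_sep[OF T e] .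
  have uV: "u \<in> V" using tree_edge_ne[OF T e] by simp
  have uw: "u \<noteq> w" using vw sep reach_sym by metis
  have wu: "(w,v) \<in> (adj_in ?G V)\<^sup>*" using vw by (rule reach_sym)
  have ne: "V \<noteq> {}" using T unfolding is_tree_def by blast
  have sub: "?T' \<subseteq> {{a, b} | a b. a \<in> V \<and> b \<in> V \<and> a \<noteq> b}"
    using T uV w uw unfolding is_tree_def by blast
  have GT': "adj_in ?G V \<subseteq> adj_in ?T' V" by (rule adj_mono) auto
  have uT'w: "(u,w) \<in> (adj_in ?T' V)\<^sup>*" using uV w by (intro reach_edge) auto
  have fromu: "(u,z) \<in> (adj_in ?T' V)\<^sup>*" if z: "z \<in> V" for z
  proof -
    from tree_split[OF T e z] show ?thesis
    proof
      assume "(u,z) \<in> (adj_in ?G V)\<^sup>*"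
      then show ?thesis by (rule rt_sub[OF GT'])
    next
      assume "(v,z) \<in> (adj_in ?G V)\<^sup>*"
      then have "(w,z) \<in> (adj_in ?G V)\<^sup>*" using wu by (meson rtrancl_trans)
      then have "(w,z) \<in> (adj_in ?T' V)\<^sup>*" by (rule rt_sub[OF GT'])
      then show ?thesis using uT'w by (meson rtrancl_trans)
    qed
  qed
  have conn: "connected_in ?T' V" unfolding connected_in_def
    using fromu reach_sym by (meson rtrancl_trans)
  have acyc: "\<not> has_cycle ?T'"
  proof (rule acyclic_crit)
    have "\<Union>?G \<subseteq> \<Union>T" by (rule Union_mono) blast
    then show "\<Union>?T' \<subseteq> V" using tree_Union[OF T] uV w by simp
  next
    fix x y assume xy: "{x,y} \<in> ?T'" "x \<noteq> y"
    show "(x,y) \<notin> (adj_in (?T' - {{x,y}}) V)\<^sup>*"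
    proof
      assume r: "(x,y) \<in> (adj_in (?T' - {{x,y}}) V)\<^sup>*"
      show False
      proof (cases "{x,y} = {u,w}")
        case True
        then have "?T' - {{x,y}} \<subseteq> ?G" by blast
        then have "(x,y) \<in> (adj_in ?G V)\<^sup>*" using reach_mono[OF r _ order_refl] by blast
        then have "(u,w) \<in> (adj_in ?G V)\<^sup>*" using True reach_sym by (metis doubleton_eq_iff)
        then have "(u,v) \<in> (adj_in ?G V)\<^sup>*" using wu by (meson rtrancl_trans)
        then show False using sep by simp
      next
        case False
        then have xyG: "{x,y} \<in> ?G" using xy by blast
        have xyV: "x \<in> V" "y \<in> V" using tree_edge_ne[OF T, of x y] xyG by auto
        let ?K = "?G - {{x,y}}"
        have "?T' - {{x,y}} = insert {u,w} ?K" using False by blast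
        then have r': "(x,y) \<in> (adj_in (insert {u,w} ?K) V)\<^sup>*" using r by simp
        have KG: "\<And>p q. (p,q) \<in> (adj_in ?K V)\<^sup>* \<Longrightarrow> (p,q) \<in> (adj_in ?G V)\<^sup>*"
          by (erule reach_mono) auto
        have xyr: "(x,y) \<in> (adj_in ?G V)\<^sup>*" using xyG xyV by (intro reach_edge) auto
        from reach_insert[OF r'] show False
        proof (elim disjE conjE)
          assume "(x,y) \<in> (adj_in ?K V)\<^sup>*"
          then have "(x,y) \<in> (adj_in (T - {{x,y}}) V)\<^sup>*" by (rule reach_mono) auto
          then show False using tree_edge_sep[OF T, of x y] xyG by blast
        next
          assume a1: "(x,u) \<in> (adj_in ?K V)\<^sup>*" and a2: "(w,y) \<in> (adj_in ?K V)\<^sup>*"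
          have "(u,x) \<in> (adj_in ?G V)\<^sup>*" using KG[OF a1] by (rule reach_sym)
          moreover have "(y,w) \<in> (adj_in ?G V)\<^sup>*" using KG[OF a2] by (rule reach_sym)
          ultimately have "(u,w) \<in> (adj_in ?G V)\<^sup>*" using xyr by (meson rtrancl_trans)
          then have "(u,v) \<in> (adj_in ?G V)\<^sup>*" using wu by (meson rtrancl_trans)
          then show False using sep by simp
        next
          assume a1: "(x,w) \<in> (adj_in ?K V)\<^sup>*" and a2: "(u,y) \<in> (adj_in ?K V)\<^sup>*"
          have "(y,x) \<in> (adj_in ?G V)\<^sup>*" using xyr by (rule reach_sym)
          then have "(u,w) \<in> (adj_in ?G V)\<^sup>*" using KG[OF a1] KG[OF a2] by (meson rtrancl_trans)
          then have "(u,v) \<in> (adj_in ?G V)\<^sup>*" using wu by (meson rtrancl_trans)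
          then show False using sep by simp
        qed
      qed
    qed
  qed
  show ?thesis unfolding is_tree_def using ne sub conn acyc by blast
qed

lemma I_sub: "e \<in> E \<Longrightarrow> V' \<subseteq> e \<Longrightarrow> I_H V E V' \<subseteq> e"
  unfolding I_H_def by auto

lemma I_contains: "V' \<subseteq> V \<Longrightarrow> V' \<subseteq> I_H V E V'"
  unfolding I_H_def by auto

lemma I_sub_V: "\<forall>e\<in>E. e \<subseteq> V \<Longrightarrow> I_H V E V' \<subseteq> V"
  unfolding I_H_def by auto

lemma I_notin: "w \<notin> I_H V E V' \<Longrightarrow> w \<in> V \<Longrightarrow> \<exists>e\<in>E. V' \<subseteq> e \<and> w \<notin> e"
  unfolding I_H_def by (auto split: if_splits)

lemma P2F_aux:
  assumes hg1: "hypergraph V E1" and H: "host_tree V E1 T"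
    and eq: "\<And>T'. host_tree V E1 T' \<Longrightarrow> host_tree V E2 T'"
    and e: "{u,v} \<in> T" and w1: "w \<in> I_H V E1 {u,v}" and w2: "w \<notin> I_H V E2 {u,v}"
    and vw: "(v,w) \<in> (adj_in (T - {{u,v}}) V)\<^sup>*"
  shows False
proof -
  let ?G = "T - {{u,v}}"
  let ?T' = "insert {u,w} ?G"
  have T: "is_tree V T" using H unfolding host_tree_def by blast
  have sep: "(u,v) \<notin> (adj_in ?G V)\<^sup>*" using tree_edge_sep[OF T e] .
  have wV: "w \<in> V" using w1 I_sub_V[of E1 V "{u,v}"] hg1 unfolding hypergraph_def by blast
  obtain f where f: "f \<in> E2" "{u,v} \<subseteq> f" "w \<notin> f" using I_notin[OF w2 wV] by blast
  have T': "is_tree V ?T'" by (rule exchange[OF T e wV vw])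
  have GT': "\<And>S. adj_in ?G S \<subseteq> adj_in ?T' S" by (rule adj_mono) auto
  have wu: "(w,v) \<in> (adj_in ?G V)\<^sup>*" using vw by (rule reach_sym)
  have host1: "connected_in ?T' g" if g: "g \<in> E1" for g
  proof -
    have gc: "connected_in T g" using H g unfolding host_tree_def by blast
    have TG: "T = insert {u,v} ?G" using e by blast
    have uv: "(u,v) \<in> (adj_in ?T' g)\<^sup>*" if ug: "u \<in> g" and vg: "v \<in> g"
    proof -
      have wg: "w \<in> g" using I_sub[OF g, of "{u,v}" V] ug vg w1 by blast
      have "(v,w) \<in> (adj_in T g)\<^sup>*" using gc vg wg unfolding connected_in_def by blast
      then have "(v,w) \<in> (adj_in (insert {u,v} ?G) g)\<^sup>*" using TG by simp
      from reach_insert[OF this] have "(v,w) \<in> (adj_in ?G g)\<^sup>*"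
      proof (elim disjE conjE)
        assume "(v,u) \<in> (adj_in ?G g)\<^sup>*"
        then have "(v,u) \<in> (adj_in ?G V)\<^sup>*" by (rule reach_mono) (use g hg1 in \<open>auto simp: hypergraph_def\<close>)
        then show ?thesis using sep reach_sym by metis
      next
        assume "(u,w) \<in> (adj_in ?G g)\<^sup>*"
        then have "(u,w) \<in> (adj_in ?G V)\<^sup>*" by (rule reach_mono) (use g hg1 in \<open>auto simp: hypergraph_def\<close>)
        then show ?thesis using sep wu by (meson rtrancl_trans)
      qed simp
      then have "(v,w) \<in> (adj_in ?T' g)\<^sup>*" by (rule rt_sub[OF GT'])
      then have "(w,v) \<in> (adj_in ?T' g)\<^sup>*" by (rule reach_sym)
      moreover have "(u,w) \<in> (adj_in ?T' g)\<^sup>*" using ug wg by (intro reach_edge) auto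
      ultimately show ?thesis by (meson rtrancl_trans)
    qed
    show ?thesis unfolding connected_in_def
    proof (intro ballI)
      fix x y assume x: "x \<in> g" and y: "y \<in> g"
      have "(x,y) \<in> (adj_in T g)\<^sup>*" using gc x y unfolding connected_in_def by blast
      then have "(x,y) \<in> (adj_in (insert {u,v} ?G) g)\<^sup>*" using TG by simp
      from reach_insert[OF this] show "(x,y) \<in> (adj_in ?T' g)\<^sup>*"
      proof (elim disjE conjE)
        assume "(x,y) \<in> (adj_in ?G g)\<^sup>*"
        then show ?thesis by (rule rt_sub[OF GT'])
      next
        assume a1: "(x,u) \<in> (adj_in ?G g)\<^sup>*" and a2: "(v,y) \<in> (adj_in ?G g)\<^sup>*"
        have ug: "u \<in> g" using reach_in[OF a1 x] .
        have vg: "v \<in> g" using reach_in[OF reach_sym[OF a2] y] .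
        have "(x,u) \<in> (adj_in ?T' g)\<^sup>*" "(v,y) \<in> (adj_in ?T' g)\<^sup>*"
          using rt_sub[OF GT' a1] rt_sub[OF GT' a2] by auto
        then show ?thesis using uv[OF ug vg] by (meson rtrancl_trans)
      next
        assume a1: "(x,v) \<in> (adj_in ?G g)\<^sup>*" and a2: "(u,y) \<in> (adj_in ?G g)\<^sup>*"
        have vg: "v \<in> g" using reach_in[OF a1 x] .
        have ug: "u \<in> g" using reach_in[OF reach_sym[OF a2] y] .
        have "(x,v) \<in> (adj_in ?T' g)\<^sup>*" "(u,y) \<in> (adj_in ?T' g)\<^sup>*"
          using rt_sub[OF GT' a1] rt_sub[OF GT' a2] by auto
        then show ?thesis using reach_sym[OF uv[OF ug vg]] by (meson rtrancl_trans)
      qed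
    qed
  qed
  have "host_tree V E1 ?T'" unfolding host_tree_def using T' host1 by blast
  then have "host_tree V E2 ?T'" by (rule eq)
  then have fc: "connected_in ?T' f" using f(1) unfolding host_tree_def by blast
  have "adj_in ?T' f \<subseteq> adj_in ?G V"
  proof
    fix p assume "p \<in> adj_in ?T' f"
    then obtain p1 p2 where pp: "p = (p1,p2)" "p1 \<in> f" "p2 \<in> f" "{p1,p2} \<in> ?T'" by (auto simp: adj_in_def)
    have "{p1,p2} \<noteq> {u,w}"
    proof
      assume "{p1,p2} = {u,w}"
      then have "w \<in> {p1,p2}" by simp
      then show False using pp(2,3) f(3) by auto
    qed
    then have "{p1,p2} \<in> ?G" using pp by blast
    then show "p \<in> adj_in ?G V" using pp tree_edge_ne[OF T, of p1 p2] by (auto simp: adj_in_def)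
  qed
  moreover have "(u,v) \<in> (adj_in ?T' f)\<^sup>*" using fc f(2) unfolding connected_in_def by blast
  ultimately have "(u,v) \<in> (adj_in ?G V)\<^sup>*" by (rule rt_sub)
  then show False using sep by simp
qed

lemma P2F:
  assumes hg1: "hypergraph V E1" and H: "host_tree V E1 T"
    and eq: "\<And>T'. host_tree V E1 T' \<Longrightarrow> host_tree V E2 T'"
    and e: "{u,v} \<in> T"
  shows "I_H V E1 {u,v} \<subseteq> I_H V E2 {u,v}"
proof
  fix w assume w1: "w \<in> I_H V E1 {u,v}"
  show "w \<in> I_H V E2 {u,v}"
  proof (rule ccontr)
    assume w2: "w \<notin> I_H V E2 {u,v}"
    have T: "is_tree V T" using H unfolding host_tree_def by blast
    have wV: "w \<in> V" using w1 I_sub_V[of E1 V "{u,v}"] hg1 unfolding hypergraph_def by blast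
    from tree_split[OF T e wV] show False
    proof
      assume "(v,w) \<in> (adj_in (T - {{u,v}}) V)\<^sup>*"
      then show False using P2F_aux[OF hg1 H eq e w1 w2] by blast
    next
      assume a: "(u,w) \<in> (adj_in (T - {{u,v}}) V)\<^sup>*"
      have e': "{v,u} \<in> T" using e by (simp add: insert_commute)
      have "{v,u} = {u,v}" by (simp add: insert_commute)
      then show False using P2F_aux[OF hg1 H eq e', of w] w1 w2 a by simp
    qed
  qed
qed

lemma conn_single: "connected_in K {x}"
  by (auto simp: connected_in_def)

lemma gen_sub:
  assumes hg: "hypergraph V E" and S: "S \<in> generated E"
  shows "S \<subseteq> V \<and> S \<noteq> {}"
  using S
proof (induction rule: generated.induct)
  case (edge e) then show ?case using hg unfolding hypergraph_def by blast
next
  case (inter A B) then show ?case by blast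
next
  case (union F S) then show ?case unfolding connected_union_of_def by blast
qed

lemma gen_Inter: "finite FF \<Longrightarrow> FF \<noteq> {} \<Longrightarrow> FF \<subseteq> generated E \<Longrightarrow> \<Inter>FF \<noteq> {} \<Longrightarrow> \<Inter>FF \<in> generated E"
proof (induction FF rule: finite_ne_induct)
  case (singleton x) then show ?case by simp
next
  case (insert A FF)
  then have "\<Inter>FF \<in> generated E" by auto
  moreover have "A \<in> generated E" using insert by auto
  moreover have "A \<inter> \<Inter>FF \<noteq> {}" using insert.prems by simp
  ultimately show ?case by (simp add: generated.inter)
qed

lemma hg_finite: "hypergraph V E \<Longrightarrow> finite E"
  unfolding hypergraph_def by (meson Pow_iff finite_Pow_iff finite_subset subsetI)

lemma I_gen:
  assumes "hypergraph V E" "V' \<noteq> {}" "{e\<in>E. V'\<subseteq>e} \<noteq> {}"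
  shows "I_H V E V' \<in> generated E"
proof -
  have "I_H V E V' = \<Inter>{e\<in>E. V'\<subseteq>e}" unfolding I_H_def by (rule if_not_P[OF assms(3)])
  moreover have "\<Inter>{e\<in>E. V'\<subseteq>e} \<in> generated E"
    using assms hg_finite[OF assms(1)] by (intro gen_Inter) (auto intro: generated.edge)
  ultimately show ?thesis by simp
qed

lemma gen_conn:
  assumes H: "host_tree V E T" and S: "S \<in> generated E"
  shows "connected_in T S"
  using S
proof (induction rule: generated.induct)
  case (edge e) then show ?case using H unfolding host_tree_def by blast
next
  case (inter A B) then show ?case using inter_conn H unfolding host_tree_def by blast
next
  case (union F S) then show ?case using conn_union unfolding connected_union_of_def by blast
qed

lemma I_conn:
  assumes "hypergraph V E" "host_tree V E T" "V' \<noteq> {}"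
  shows "connected_in T (I_H V E V')"
proof (cases "{e\<in>E. V'\<subseteq>e} = {}")
  case True
  then show ?thesis using assms(2) unfolding I_H_def host_tree_def is_tree_def by simp
next
  case False
  then show ?thesis using I_gen[OF assms(1,3) False] gen_conn[OF assms(2)] by blast
qed

definition fam :: "'a set \<Rightarrow> 'a set set \<Rightarrow> 'a set set \<Rightarrow> 'a set \<Rightarrow> 'a set set" where
  "fam V E T e = {I_H V E {u,v} | u v. {u,v} \<in> T \<and> u \<in> e \<and> v \<in> e}"

lemma step_out: "(X,Z) \<in> R\<^sup>* \<Longrightarrow> X \<noteq> Z \<Longrightarrow> \<exists>Y. (X,Y) \<in> R \<and> Y \<noteq> X"
proof (induction rule: rtrancl_induct)
  case base then show ?case by simp
next
  case (step Y Z) then show ?case by (cases "X = Y") auto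
qed

lemma edge_decomp:
  assumes hg: "hypergraph V E" and e: "e \<in> E" and c: "connected_in T e" and ns: "\<not> (\<exists>x. e = {x})"
  shows "connected_union_of (fam V E T e) e"
proof -
  have eV: "e \<subseteq> V" "e \<noteq> {}" using hg e unfolding hypergraph_def by auto
  have memb: "I_H V E {u,v} \<subseteq> e" if "u \<in> e" "v \<in> e" for u v
    using I_sub[OF e, of "{u,v}" V] that by blast
  have cont: "{u,v} \<subseteq> I_H V E {u,v}" if "u \<in> e" "v \<in> e" for u v
    using I_contains[of "{u,v}" V E] that eV by blast
  have sub: "\<Union>(fam V E T e) \<subseteq> e" using memb unfolding fam_def by blast
  have sup: "e \<subseteq> \<Union>(fam V E T e)"
  proof
    fix x assume x: "x \<in> e"
    obtain y where y: "y \<in> e" "y \<noteq> x" using ns x by blast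
    have "(x,y) \<in> (adj_in T e)\<^sup>*" using c x y unfolding connected_in_def by blast
    then obtain z where "(x,z) \<in> adj_in T e" using step_out y(2) by metis
    then have z: "{x,z} \<in> T" "z \<in> e" by (auto simp: adj_in_def)
    then have "I_H V E {x,z} \<in> fam V E T e" using x unfolding fam_def by blast
    then show "x \<in> \<Union>(fam V E T e)" using cont[OF x z(2)] by blast
  qed
  have U: "\<Union>(fam V E T e) = e" using sub sup by blast
  have fin: "finite (fam V E T e)"
  proof (rule finite_subset)
    show "fam V E T e \<subseteq> Pow V" using I_sub_V[of E V] hg unfolding fam_def hypergraph_def by blast
    show "finite (Pow V)" using hg unfolding hypergraph_def by simp
  qed
  have ne: "fam V E T e \<noteq> {}" using U eV by auto
  let ?rel = "{(X, Y). X \<in> fam V E T e \<and> Y \<in> fam V E T e \<and> X \<inter> Y \<noteq> {}}"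
  have igc: "int_graph_connected (fam V E T e)" unfolding int_graph_connected_def
  proof (intro ballI)
    fix A B assume A: "A \<in> fam V E T e" and B: "B \<in> fam V E T e"
    obtain a b where ab: "A = I_H V E {a,b}" "{a,b} \<in> T" "a \<in> e" "b \<in> e" using A unfolding fam_def by blast
    obtain c d where cd: "B = I_H V E {c,d}" "{c,d} \<in> T" "c \<in> e" "d \<in> e" using B unfolding fam_def by blast
    have "(a,c) \<in> (adj_in T e)\<^sup>*" using c ab cd unfolding connected_in_def by blast
    then have "\<exists>X \<in> fam V E T e. c \<in> X \<and> (A,X) \<in> ?rel\<^sup>*"
    proof (induction rule: rtrancl_induct)
      case base then show ?case using A cont[OF ab(3,4)] ab(1) by blast
    next
      case (step y z)
      then obtain X where X: "X \<in> fam V E T e" "y \<in> X" "(A,X) \<in> ?rel\<^sup>*" by blast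
      from step.hyps(2) have yz: "{y,z} \<in> T" "y \<in> e" "z \<in> e" by (auto simp: adj_in_def)
      let ?X = "I_H V E {y,z}"
      have X': "?X \<in> fam V E T e" using yz unfolding fam_def by blast
      have "y \<in> ?X" "z \<in> ?X" using cont[OF yz(2,3)] by auto
      then have "(X, ?X) \<in> ?rel" using X X' by blast
      then have "(A, ?X) \<in> ?rel\<^sup>*" using X(3) by (meson rtrancl_into_rtrancl)
      then show ?case using X' \<open>z \<in> ?X\<close> by blast
    qed
    then obtain X where X: "X \<in> fam V E T e" "c \<in> X" "(A,X) \<in> ?rel\<^sup>*" by blast
    have "c \<in> B" using cont[OF cd(3,4)] cd(1) by blast
    then have "(X,B) \<in> ?rel" using X B by blast
    then show "(A,B) \<in> ?rel\<^sup>*" using X(3) by (meson rtrancl_into_rtrancl)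
  qed
  show ?thesis unfolding connected_union_of_def using ne fin igc U by blast
qed

lemma P2B:
  assumes hg1: "hypergraph V E1" and hg2: "hypergraph V E2" and H2: "host_tree V E2 T"
    and Ieq: "\<forall>u v. {u,v} \<in> T \<longrightarrow> I_H V E1 {u,v} = I_H V E2 {u,v}"
    and H1': "host_tree V E1 T'"
  shows "host_tree V E2 T'"
  unfolding host_tree_def
proof (intro conjI ballI)
  show "is_tree V T'" using H1' unfolding host_tree_def by blast
next
  fix e assume e: "e \<in> E2"
  show "connected_in T' e"
  proof (cases "\<exists>x. e = {x}")
    case True
    then obtain x where "e = {x}" by blast
    then show ?thesis using conn_single by simp
  next
    case False
    have ce: "connected_in T e" using H2 e unfolding host_tree_def by blast
    have cu: "connected_union_of (fam V E2 T e) e" by (rule edge_decomp[OF hg2 e ce False])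
    have "connected_in T' X" if X: "X \<in> fam V E2 T e" for X
    proof -
      obtain u v where uv: "X = I_H V E2 {u,v}" "{u,v} \<in> T" using X unfolding fam_def by blast
      then have "X = I_H V E1 {u,v}" using Ieq by simp
      then show ?thesis using I_conn[OF hg1 H1', of "{u,v}"] by simp
    qed
    then show ?thesis using conn_union cu unfolding connected_union_of_def by metis
  qed
qed

definition CC :: "'a set \<Rightarrow> 'a set set \<Rightarrow> 'a set set" where
  "CC V E = generated E \<union> {V} \<union> {{v} | v. v \<in> V}"

lemma Comp_CC: "hypergraph V E \<Longrightarrow> Comp V E = CC V E"
  unfolding Comp_def CC_def using gen_sub by blast

lemma CC_sub: "hypergraph V E \<Longrightarrow> V \<noteq> {} \<Longrightarrow> X \<in> CC V E \<Longrightarrow> X \<subseteq> V \<and> X \<noteq> {}"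
  unfolding CC_def using gen_sub by blast

lemma CC_inter:
  assumes hg: "hypergraph V E" and ne: "V \<noteq> {}" and A: "A \<in> CC V E" and B: "B \<in> CC V E"
    and AB: "A \<inter> B \<noteq> {}"
  shows "A \<inter> B \<in> CC V E"
proof -
  have As: "A \<subseteq> V" and Bs: "B \<subseteq> V" using CC_sub[OF hg ne] A B by auto
  show ?thesis
  proof (cases "A = V")
    case True then show ?thesis using B Bs by (simp add: Int_absorb1)
  next
    case nA: False
    show ?thesis
    proof (cases "B = V")
      case True then show ?thesis using A As by (simp add: Int_absorb2)
    next
      case nB: False
      show ?thesis
      proof (cases "\<exists>a. A = {a}")
        case True
        then obtain a where "A = {a}" by blast
        then have "A \<inter> B = {a}" "a \<in> V" using AB As by auto
        then show ?thesis unfolding CC_def by blast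
      next
        case nA1: False
        show ?thesis
        proof (cases "\<exists>b. B = {b}")
          case True
          then obtain b where "B = {b}" by blast
          then have "A \<inter> B = {b}" "b \<in> V" using AB Bs by auto
          then show ?thesis unfolding CC_def by blast
        next
          case False
          then have "A \<in> generated E" "B \<in> generated E" using A B nA nB nA1 unfolding CC_def by auto
          then show ?thesis using AB generated.inter unfolding CC_def by blast
        qed
      qed
    qed
  qed
qed

lemma CC_union:
  assumes hg: "hypergraph V E" and ne: "V \<noteq> {}" and F: "F \<subseteq> CC V E"
    and cu: "connected_union_of F S"
  shows "S \<in> CC V E"
proof -
  have Fs: "\<And>X. X \<in> F \<Longrightarrow> X \<subseteq> V \<and> X \<noteq> {}" using CC_sub[OF hg ne] F by blast
  have SU: "\<Union>F = S" and Fne: "F \<noteq> {}" and fin: "finite F" and igc: "int_graph_connected F"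
    using cu unfolding connected_union_of_def by auto
  have SV: "S \<subseteq> V" using Fs SU by blast
  have Sne: "S \<noteq> {}" using Fs SU Fne by blast
  show ?thesis
  proof (cases "V \<in> F")
    case True then have "S = V" using SU SV by blast
    then show ?thesis unfolding CC_def by blast
  next
    case VF: False
    show ?thesis
    proof (cases "\<exists>x. S = {x}")
      case True then show ?thesis using SV unfolding CC_def by blast
    next
      case nS: False
      define F' where "F' = F \<inter> generated E"
      have sing: "\<exists>x. X = {x}" if "X \<in> F" "X \<notin> F'" for X
        using that F VF unfolding F'_def CC_def by blast
      let ?rel = "{(X, Y). X \<in> F \<and> Y \<in> F \<and> X \<inter> Y \<noteq> {}}"
      let ?rel' = "{(X, Y). X \<in> F' \<and> Y \<in> F' \<and> X \<inter> Y \<noteq> {}}"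
      have cover: "\<exists>Y\<in>F'. x \<in> Y" if x: "x \<in> S" for x
      proof -
        obtain X where X: "X \<in> F" "x \<in> X" using x SU by blast
        show ?thesis
        proof (cases "X \<in> F'")
          case True then show ?thesis using X by blast
        next
          case False
          then obtain x' where "X = {x'}" using sing X by blast
          then have Xx: "X = {x}" using X by simp
          have "\<exists>Z\<in>F. Z \<noteq> X"
          proof (rule ccontr)
            assume "\<not> (\<exists>Z\<in>F. Z \<noteq> X)"
            then have "F = {X}" using X by blast
            then show False using SU nS Xx by blast
          qed
          then obtain Z where Z: "Z \<in> F" "Z \<noteq> X" by blast
          have xz: "(X,Z) \<in> ?rel\<^sup>*" using igc X Z unfolding int_graph_connected_def by blast
          have "X \<noteq> Z" using Z(2) by simp
          then obtain Y where Y: "(X,Y) \<in> ?rel" "Y \<noteq> X" using step_out[OF xz] by blast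
          then have YF: "Y \<in> F" and xY: "x \<in> Y" using Xx by auto
          have "Y \<in> F'"
          proof (rule ccontr)
            assume "Y \<notin> F'"
            then obtain y where "Y = {y}" using sing YF by blast
            then show False using xY Y(2) Xx by simp
          qed
          then show ?thesis using xY by blast
        qed
      qed
      have U': "\<Union>F' = S" using cover SU unfolding F'_def by blast
      have ne': "F' \<noteq> {}" using U' Sne by auto
      have fin': "finite F'" using fin unfolding F'_def by simp
      have igc': "int_graph_connected F'" unfolding int_graph_connected_def
      proof (intro ballI)
        fix A B assume A: "A \<in> F'" and B: "B \<in> F'"
        have "(A,B) \<in> ?rel\<^sup>*" using igc A B unfolding int_graph_connected_def F'_def by blast
        then have "\<exists>Z'\<in>F'. B \<subseteq> Z' \<and> (A,Z') \<in> ?rel'\<^sup>*"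
        proof (induction rule: rtrancl_induct)
          case base then show ?case using A by blast
        next
          case (step Z W)
          then obtain Z' where Z': "Z' \<in> F'" "Z \<subseteq> Z'" "(A,Z') \<in> ?rel'\<^sup>*" by blast
          have ZW: "Z \<inter> W \<noteq> {}" "W \<in> F" using step.hyps(2) by auto
          show ?case
          proof (cases "W \<in> F'")
            case True
            then have "(Z',W) \<in> ?rel'" using Z' ZW by blast
            then show ?thesis using Z'(3) True by (meson rtrancl_into_rtrancl order_refl)
          next
            case False
            then obtain y where "W = {y}" using sing ZW by blast
            then have "W \<subseteq> Z'" using ZW Z'(2) by auto
            then show ?thesis using Z' by blast
          qed
        qed
        then obtain Z' where Z': "Z' \<in> F'" "B \<subseteq> Z'" "(A,Z') \<in> ?rel'\<^sup>*" by blast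
        have "B \<noteq> {}" using Fs B unfolding F'_def by blast
        then have "(Z',B) \<in> ?rel'" using Z' B by blast
        then show "(A,B) \<in> ?rel'\<^sup>*" using Z'(3) by (meson rtrancl_into_rtrancl)
      qed
      have "connected_union_of F' S" unfolding connected_union_of_def using ne' fin' igc' U' by blast
      moreover have "\<And>X. X \<in> F' \<Longrightarrow> X \<in> generated E" unfolding F'_def by blast
      ultimately have "S \<in> generated E" using generated.union by metis
      then show ?thesis unfolding CC_def by blast
    qed
  qed
qed

lemma gen_sub_CC:
  assumes hg1: "hypergraph V E1" and hg2: "hypergraph V E2" and ne: "V \<noteq> {}"
    and H1: "host_tree V E1 T"
    and Ieq: "\<forall>u v. {u,v} \<in> T \<longrightarrow> I_H V E1 {u,v} = I_H V E2 {u,v}"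
  shows "generated E1 \<subseteq> CC V E2"
proof
  fix S assume "S \<in> generated E1"
  then show "S \<in> CC V E2"
  proof (induction rule: generated.induct)
    case (edge e)
    show ?case
    proof (cases "\<exists>x. e = {x}")
      case True
      then obtain x where "e = {x}" by blast
      moreover have "x \<in> V" using edge hg1 calculation unfolding hypergraph_def by blast
      ultimately show ?thesis unfolding CC_def by blast
    next
      case False
      have ce: "connected_in T e" using H1 edge unfolding host_tree_def by blast
      have cu: "connected_union_of (fam V E1 T e) e" by (rule edge_decomp[OF hg1 edge ce False])
      have "fam V E1 T e = fam V E2 T e" unfolding fam_def
      proof (intro Collect_cong iffI)
        fix x assume "\<exists>u v. x = I_H V E1 {u, v} \<and> {u, v} \<in> T \<and> u \<in> e \<and> v \<in> e"
        then obtain u v where uv: "x = I_H V E1 {u, v}" "{u, v} \<in> T" "u \<in> e" "v \<in> e" by blast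
        then have "x = I_H V E2 {u, v}" using Ieq by simp
        then show "\<exists>u v. x = I_H V E2 {u, v} \<and> {u, v} \<in> T \<and> u \<in> e \<and> v \<in> e" using uv by blast
      next
        fix x assume "\<exists>u v. x = I_H V E2 {u, v} \<and> {u, v} \<in> T \<and> u \<in> e \<and> v \<in> e"
        then obtain u v where uv: "x = I_H V E2 {u, v}" "{u, v} \<in> T" "u \<in> e" "v \<in> e" by blast
        then have "x = I_H V E1 {u, v}" using Ieq by simp
        then show "\<exists>u v. x = I_H V E1 {u, v} \<and> {u, v} \<in> T \<and> u \<in> e \<and> v \<in> e" using uv by blast
      qed
      moreover have "fam V E2 T e \<subseteq> CC V E2"
      proof
        fix X assume "X \<in> fam V E2 T e"
        then obtain u v where X: "X = I_H V E2 {u,v}" unfolding fam_def by blast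
        show "X \<in> CC V E2"
        proof (cases "{f\<in>E2. {u,v}\<subseteq>f} = {}")
          case True then show ?thesis using X unfolding I_H_def CC_def by simp
        next
          case False then show ?thesis using I_gen[OF hg2 _ False] X unfolding CC_def by blast
        qed
      qed
      ultimately show ?thesis using CC_union[OF hg2 ne _ cu] by simp
    qed
  next
    case (inter A B) then show ?case using CC_inter[OF hg2 ne] by blast
  next
    case (union F S) then show ?case using CC_union[OF hg2 ne] by blast
  qed
qed

lemma comp_conn:
  assumes hg: "hypergraph V E" and H: "host_tree V E T" and S: "S \<in> Comp V E"
  shows "connected_in T S"
proof -
  have T: "is_tree V T" using H unfolding host_tree_def by blast
  from S consider "S = V" | v where "S = {v}" | "S \<in> generated E" unfolding Comp_def by blast
  then show ?thesis
  proof cases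
    case 1 then show ?thesis using T unfolding is_tree_def by simp
  next
    case 2 then show ?thesis using conn_single by simp
  next
    case 3 then show ?thesis using gen_conn[OF H] by simp
  qed
qed

lemma P1B:
  assumes hg1: "hypergraph V E1" and hg2: "hypergraph V E2"
    and B: "basic_sets V E1 = basic_sets V E2" and H1: "host_tree V E1 T"
  shows "host_tree V E2 T"
proof -
  have T: "is_tree V T" using H1 unfolding host_tree_def by blast
  have ne: "V \<noteq> {}" using T unfolding is_tree_def by blast
  have finV: "finite V" using hg1 unfolding hypergraph_def by blast
  have main: "\<forall>S. card S = n \<longrightarrow> S \<in> Comp V E2 \<longrightarrow> connected_in T S" for n
  proof (induction n rule: less_induct)
    case (less n)
    show ?case
    proof (intro allI impI)
      fix S assume cS: "card S = n" and S: "S \<in> Comp V E2"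
      have SC: "S \<subseteq> V" "S \<noteq> {}" using CC_sub[OF hg2 ne] S Comp_CC[OF hg2] by auto
      have finS: "finite S" using SC finV finite_subset by blast
      show "connected_in T S"
      proof (cases "S \<in> basic_sets V E2")
        case True
        then have "S \<in> Comp V E1" using B unfolding basic_sets_def by blast
        then show ?thesis using comp_conn[OF hg1 H1] by blast
      next
        case nb: False
        show ?thesis
        proof (cases "card S > 1")
          case False
          then have "card S = 1" using SC finS by (metis One_nat_def card_gt_0_iff less_Suc0 nat_neq_iff)
          then obtain x where "S = {x}" using card_1_singletonE by blast
          then show ?thesis using conn_single by simp
        next
          case True
          then obtain F where F: "F \<subseteq> {X \<in> Comp V E2. X \<subset> S}" "connected_union_of F S"
            using nb S unfolding basic_sets_def by blast
          have "connected_in T X" if X: "X \<in> F" for X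
          proof -
            have "X \<in> Comp V E2" "X \<subset> S" using F X by auto
            moreover have "card X < n" using psubset_card_mono[OF finS \<open>X \<subset> S\<close>] cS by simp
            ultimately show ?thesis using less by blast
          qed
          then show ?thesis using conn_union F(2) unfolding connected_union_of_def by metis
        qed
      qed
    qed
  qed
  have "connected_in T e" if e: "e \<in> E2" for e
  proof -
    have "e \<in> Comp V E2" using e generated.edge Comp_CC[OF hg2] unfolding CC_def by blast
    then show ?thesis using main by blast
  qed
  then show ?thesis unfolding host_tree_def using T by blast
qed

theorem mainTheorem6:
  fixes V :: "'a set" and E1 E2 :: "'a set set"
  assumes "hypertree V E1" and "hypertree V E2"
  shows "(equivalent V E1 E2 \<longleftrightarrow> basic_sets V E1 = basic_sets V E2)
     \<and> (\<forall>T. host_tree V E1 T \<and> host_tree V E2 T \<longrightarrow>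
          (equivalent V E1 E2 \<longleftrightarrow> (\<forall>u v. {u, v} \<in> T \<longrightarrow> I_H V E1 {u, v} = I_H V E2 {u, v})))"
proof -
  have hg1: "hypergraph V E1" and hg2: "hypergraph V E2" using assms unfolding hypertree_def by blast+
  obtain T0 where T0: "host_tree V E1 T0" using assms unfolding hypertree_def by blast
  have ne: "V \<noteq> {}" using T0 unfolding host_tree_def is_tree_def by blast
  have eqI: "\<forall>u v. {u,v} \<in> T \<longrightarrow> I_H V E1 {u,v} = I_H V E2 {u,v}"
    if eqv: "equivalent V E1 E2" and H1: "host_tree V E1 T" and H2: "host_tree V E2 T" for T
  proof (intro allI impI)
    fix u v assume e: "{u,v} \<in> T"
    have "I_H V E1 {u,v} \<subseteq> I_H V E2 {u,v}"
      using P2F[OF hg1 H1 _ e] eqv unfolding equivalent_def by blast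
    moreover have "I_H V E2 {u,v} \<subseteq> I_H V E1 {u,v}"
      using P2F[OF hg2 H2 _ e] eqv unfolding equivalent_def by blast
    ultimately show "I_H V E1 {u,v} = I_H V E2 {u,v}" by blast
  qed
  have part1: "equivalent V E1 E2 \<longleftrightarrow> basic_sets V E1 = basic_sets V E2"
  proof
    assume eqv: "equivalent V E1 E2"
    have H2: "host_tree V E2 T0" using eqv T0 unfolding equivalent_def by blast
    have Ieq: "\<forall>u v. {u,v} \<in> T0 \<longrightarrow> I_H V E1 {u,v} = I_H V E2 {u,v}" using eqI[OF eqv T0 H2] .
    have Ieq': "\<forall>u v. {u,v} \<in> T0 \<longrightarrow> I_H V E2 {u,v} = I_H V E1 {u,v}" using Ieq by simp
    have "generated E1 \<subseteq> CC V E2" by (rule gen_sub_CC[OF hg1 hg2 ne T0 Ieq])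
    moreover have "generated E2 \<subseteq> CC V E1" by (rule gen_sub_CC[OF hg2 hg1 ne H2 Ieq'])
    ultimately have "CC V E1 = CC V E2" unfolding CC_def by blast
    then have "Comp V E1 = Comp V E2" using Comp_CC[OF hg1] Comp_CC[OF hg2] by simp
    then show "basic_sets V E1 = basic_sets V E2" unfolding basic_sets_def by simp
  next
    assume B: "basic_sets V E1 = basic_sets V E2"
    show "equivalent V E1 E2" unfolding equivalent_def
      using P1B[OF hg1 hg2 B] P1B[OF hg2 hg1 B[symmetric]] by blast
  qed
  have part2: "equivalent V E1 E2 \<longleftrightarrow> (\<forall>u v. {u, v} \<in> T \<longrightarrow> I_H V E1 {u, v} = I_H V E2 {u, v})"
    if H1: "host_tree V E1 T" and H2: "host_tree V E2 T" for T
  proof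
    assume "equivalent V E1 E2" then show "\<forall>u v. {u, v} \<in> T \<longrightarrow> I_H V E1 {u, v} = I_H V E2 {u, v}"
      using eqI H1 H2 by blast
  next
    assume Ieq: "\<forall>u v. {u, v} \<in> T \<longrightarrow> I_H V E1 {u, v} = I_H V E2 {u, v}"
    then have Ieq': "\<forall>u v. {u,v} \<in> T \<longrightarrow> I_H V E2 {u,v} = I_H V E1 {u,v}" by simp
    show "equivalent V E1 E2" unfolding equivalent_def
      using P2B[OF hg1 hg2 H2 Ieq] P2B[OF hg2 hg1 H1 Ieq'] by blast
  qed
  show ?thesis using part1 part2 by blast
qed

end
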